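(* Let $\boldsymbol{x}\in\mathbb{R}^n$, $\theta\in\mathbb{R}$, $\alpha>0$, and let $\boldsymbol{s}(t,\boldsymbol{x})=\boldsymbol{x}\sum_jc(t-\tau_j)$ be a stimulus (see context). Consider $$\dot{\boldsymbol{w}}=\alpha\,v(\boldsymbol{s}(t,\boldsymbol{x}),\boldsymbol{w},\theta)\,y(\boldsymbol{s}(t,\boldsymbol{x}),\boldsymbol{w})\big(\boldsymbol{s}(t,\boldsymbol{x})-\boldsymbol{w}\,y(\boldsymbol{s}(t,\boldsymbol{x}),\boldsymbol{w})\big),\qquad\boldsymbol{w}(t_0)=\boldsymbol{w}_0\in\mathbb{R}^n,\ \boldsymbol{w}_0\ne0.$$ Then: 1) the solution $\boldsymbol{w}(\cdot,\boldsymbol{w}_0)$ is defined for all $t\ge t_0$, is unique, and is bounded in forward time. 2) If in addition $\theta\ge0$ and there exist $L,\delta>0$ such that $$\int_t^{t+L}v(\boldsymbol{s}(\tau,\boldsymbol{x}),\boldsymbol{w}(\tau,\boldsymbol{w}_0),\theta)\,\langle\boldsymbol{s}(\tau,\boldsymbol{x}),\boldsymbol{w}(\tau,\boldsymbol{w}_0)\rangle^2\,d\tau>\delta\quad\forall t\ge t_0,$$ then $\lim_{t\to\infty}\boldsymbol{w}(t,\boldsymbol{w}_0)=\boldsymbol{x}/\|\boldsymbol{x}\|$.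
   Context: Notation: $\langle\cdot,\cdot\rangle$ and $\|\cdot\|$ are the Euclidean inner product and norm on $\mathbb{R}^n$. Stimulus: fix $\Delta T>0$ and $c(t)=1$ for $t\in[0,\Delta T]$, $c(t)=0$ otherwise; $\boldsymbol{s}(t,\boldsymbol{x})=\boldsymbol{x}\sum_jc(t-\tau_j)$ with presentation times satisfying $\tau_{j+1}>\tau_j+\Delta T$. Neuron: $y(\boldsymbol{s},\boldsymbol{w})=\langle\boldsymbol{w},\boldsymbol{s}\rangle$, $v(\boldsymbol{s},\boldsymbol{w},\theta)=f(y(\boldsymbol{s},\boldsymbol{w})-\theta)$ with $f:\mathbb{R}\to\mathbb{R}$ continuous, locally Lipschitz, $f(u)=0$ for $u\le0$, $f(u)>0$ for $u>0$. *)

theory Defs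
  imports "HOL-Analysis.Analysis"
begin

definition cpulse :: "real \<Rightarrow> real \<Rightarrow> real" where
  "cpulse DT t = (if 0 \<le> t \<and> t \<le> DT then 1 else 0)"

definition stim :: "real \<Rightarrow> (nat \<Rightarrow> real) \<Rightarrow> 'a::real_vector \<Rightarrow> real \<Rightarrow> 'a" where
  "stim DT tau x t = (\<Sum>j. cpulse DT (t - tau j)) *\<^sub>R x"

definition yout :: "'a::real_inner \<Rightarrow> 'a \<Rightarrow> real" where
  "yout s w = inner w s"

definition vout :: "(real \<Rightarrow> real) \<Rightarrow> 'a::real_inner \<Rightarrow> 'a \<Rightarrow> real \<Rightarrow> real" where
  "vout f s w theta = f (yout s w - theta)"

definition rhs :: "real \<Rightarrow> (real \<Rightarrow> real) \<Rightarrow> real \<Rightarrow> real \<Rightarrow> (nat \<Rightarrow> real) \<Rightarrow> 'a::real_inner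
                    \<Rightarrow> real \<Rightarrow> 'a \<Rightarrow> 'a" where
  "rhs alpha f theta DT tau x t w =
     (let s = stim DT tau x t
      in (alpha * vout f s w theta * yout s w) *\<^sub>R (s - yout s w *\<^sub>R w))"

text \<open>Caratheodory solution on a set T of times (T contained in [t0,..)):
  w is continuous on T, w t0 = w0, and w t = w0 + integral over [t0,t] of F(tau, w tau).\<close>
definition solves_on :: "(real \<Rightarrow> 'a::euclidean_space \<Rightarrow> 'a) \<Rightarrow> real \<Rightarrow> 'a \<Rightarrow> real set
                          \<Rightarrow> (real \<Rightarrow> 'a) \<Rightarrow> bool" where
  "solves_on F t0 w0 T w \<longleftrightarrow>
     w t0 = w0 \<and> continuous_on T w \<and>
     (\<forall>t\<in>T. ((\<lambda>\<tau>. F \<tau> (w \<tau>)) has_integral (w t - w0)) {t0..t})"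

end

theory Submission
  imports Defs
begin


definition sig :: "real \<Rightarrow> (nat \<Rightarrow> real) \<Rightarrow> real \<Rightarrow> real" where
  "sig DT tau t = (\<Sum>j. cpulse DT (t - tau j))"

definition Dset :: "real \<Rightarrow> (nat \<Rightarrow> real) \<Rightarrow> real set" where
  "Dset DT tau = range tau \<union> range (\<lambda>j. tau j + DT)"

context
  fixes DT :: real and tau :: "nat \<Rightarrow> real"
  assumes DT_pos: "DT > 0" and tau_sep: "\<And>j. tau (Suc j) > tau j + DT"
begin

lemma tau_lt: "i < j \<Longrightarrow> tau i + DT < tau j"
proof (induction j)
  case 0 then show ?case by simp
next
  case (Suc j)
  show ?case
  proof (cases "i = j")
    case True then show ?thesis using tau_sep[of j] by simp
  next
    case False then have "tau i + DT < tau j" using Suc by simp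
    then show ?thesis using tau_sep[of j] DT_pos by linarith
  qed
qed

lemma tau_lb: "tau 0 + real j * DT \<le> tau j"
proof (induction j)
  case 0 then show ?case by simp
next
  case (Suc j) then show ?case using tau_sep[of j] by (simp add: algebra_simps)
qed

lemma tau_big: obtains N where "\<And>j. j > N \<Longrightarrow> tau j > b"
proof -
  obtain N :: nat where N: "real N > (b - tau 0) / DT" using reals_Archimedean2 by blast
  have "tau j > b" if "j > N" for j
  proof -
    have "real j * DT > ((b - tau 0) / DT) * DT"
      using N that DT_pos by (intro mult_strict_right_mono) auto
    then have "real j * DT > b - tau 0" using DT_pos by simp
    then show ?thesis using tau_lb[of j] by linarith
  qed
  then show ?thesis using that by blast
qed

lemma sig_eq: "sig DT tau t = (if \<exists>j. tau j \<le> t \<and> t \<le> tau j + DT then 1 else 0)"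
proof (cases "\<exists>j. tau j \<le> t \<and> t \<le> tau j + DT")
  case True
  then obtain j where j: "tau j \<le> t" "t \<le> tau j + DT" by blast
  have "(\<lambda>i. cpulse DT (t - tau i)) = (\<lambda>i. if i = j then cpulse DT (t - tau i) else 0)"
  proof
    fix i show "cpulse DT (t - tau i) = (if i = j then cpulse DT (t - tau i) else 0)"
    proof (cases "i = j")
      case False
      then have "i < j \<or> j < i" by arith
      then have "\<not> (tau i \<le> t \<and> t \<le> tau i + DT)"
        using tau_lt[of i j] tau_lt[of j i] j by auto
      then show ?thesis using False by (auto simp: cpulse_def)
    qed simp
  qed
  then have "sig DT tau t = cpulse DT (t - tau j)"
    unfolding sig_def using sums_single[of j "\<lambda>i. cpulse DT (t - tau i)"] sums_unique by metis
  then show ?thesis using True j by (simp add: cpulse_def)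
next
  case False
  then have "(\<lambda>i. cpulse DT (t - tau i)) = (\<lambda>i. 0)" by (auto simp: cpulse_def fun_eq_iff)
  then show ?thesis using False by (simp add: sig_def)
qed

lemma sig_01: "sig DT tau t = 0 \<or> sig DT tau t = 1"
  by (simp add: sig_eq)

lemma sig_bounds: "0 \<le> sig DT tau t" "sig DT tau t \<le> 1"
  by (auto simp: sig_eq)

lemma Dset_finite: "finite (Dset DT tau \<inter> {a..b})"
proof -
  obtain N where N: "\<And>j. j > N \<Longrightarrow> tau j > b" using tau_big by blast
  have "Dset DT tau \<inter> {a..b} \<subseteq> tau ` {..N} \<union> (\<lambda>j. tau j + DT) ` {..N}"
  proof
    fix t assume t: "t \<in> Dset DT tau \<inter> {a..b}"
    then obtain j where j: "t = tau j \<or> t = tau j + DT" by (auto simp: Dset_def)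
    have "j \<le> N"
    proof (rule ccontr)
      assume "\<not> j \<le> N" then have "tau j > b" using N by simp
      then show False using t j DT_pos by auto
    qed
    then show "t \<in> tau ` {..N} \<union> (\<lambda>j. tau j + DT) ` {..N}" using j by auto
  qed
  then show ?thesis by (rule finite_subset) auto
qed

lemma sig_locconst:
  assumes "t \<notin> Dset DT tau"
  shows "\<exists>e>0. \<forall>s. dist s t < e \<longrightarrow> sig DT tau s = sig DT tau t"
proof (cases "\<exists>j. tau j \<le> t \<and> t \<le> tau j + DT")
  case True
  then obtain j where j: "tau j \<le> t" "t \<le> tau j + DT" by blast
  then have j2: "tau j < t" "t < tau j + DT" using assms by (auto simp: Dset_def)
  define e where "e = min (t - tau j) (tau j + DT - t)"
  have "e > 0" using j2 by (simp add: e_def)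
  moreover have "sig DT tau s = sig DT tau t" if "dist s t < e" for s
  proof -
    have "tau j \<le> s \<and> s \<le> tau j + DT" using that by (auto simp: e_def dist_real_def)
    then show ?thesis using True by (auto simp: sig_eq)
  qed
  ultimately show ?thesis by blast
next
  case False
  obtain N where N: "\<And>j. j > N \<Longrightarrow> tau j > t + 1" using tau_big by blast
  define C where "C = (\<Union>j\<in>{..N}. {tau j..tau j + DT})"
  have "closed C" unfolding C_def by (intro closed_UN) auto
  moreover have "t \<notin> C" using False by (auto simp: C_def)
  ultimately have "open (- C)" "t \<in> - C" by auto
  then obtain e where e: "e > 0" "ball t e \<subseteq> - C"
    using open_contains_ball by blast
  define e' where "e' = min e 1"
  have "sig DT tau s = sig DT tau t" if "dist s t < e'" for s
  proof -
    have "\<not> (tau j \<le> s \<and> s \<le> tau j + DT)" for j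
    proof (cases "j \<le> N")
      case True
      have "s \<in> ball t e" using that by (auto simp: e'_def dist_commute)
      then have "s \<notin> C" using e by auto
      then show ?thesis using True by (auto simp: C_def)
    next
      case False
      then have "tau j > t + 1" using N by simp
      moreover have "s < t + 1" using that by (auto simp: e'_def dist_real_def)
      ultimately show ?thesis by simp
    qed
    then show ?thesis using False by (simp add: sig_eq)
  qed
  moreover have "e' > 0" using e by (simp add: e'_def)
  ultimately show ?thesis by blast
qed

lemma sig_isCont: "t \<notin> Dset DT tau \<Longrightarrow> isCont (sig DT tau) t"
proof -
  assume "t \<notin> Dset DT tau"
  then obtain e where e: "e > 0" "\<forall>s. dist s t < e \<longrightarrow> sig DT tau s = sig DT tau t"
    using sig_locconst by blast
  have "\<forall>\<^sub>F s in at t. sig DT tau s = sig DT tau t"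
    using e unfolding eventually_at by (metis dist_commute)
  then show ?thesis unfolding isCont_def by (rule tendsto_eventually)
qed

end



lemma pc_integrable:
  fixes h :: "real \<Rightarrow> 'a::euclidean_space"
  assumes "finite S" and cont: "\<And>t. t \<in> {a..b} - S \<Longrightarrow> isCont h t"
    and bnd: "\<And>t. t \<in> {a..b} \<Longrightarrow> norm (h t) \<le> M"
  shows "h integrable_on {a..b}"
proof -
  have neg: "negligible S" using assms(1) by (simp add: negligible_finite)
  have c: "continuous_on ({a..b} - S) h"
    using cont by (simp add: continuous_at_imp_continuous_on)
  have L: "{a..b} - S \<in> sets lebesgue"
  proof (intro sets.Diff)
    show "{a..b} \<in> sets lebesgue"
      by simp
    show "S \<in> sets lebesgue" using neg by (rule negligible_imp_sets)
  qed
  have hm: "h \<in> borel_measurable (lebesgue_on ({a..b} - S))"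
    by (rule continuous_imp_measurable_on_sets_lebesgue[OF c L])
  have Mi:  "(\<lambda>_. M) integrable_on ({a..b} - S)"
  proof -
    have "(\<lambda>_. M) integrable_on {a..b}" by (intro integrable_continuous_real continuous_intros)
    then show ?thesis
      by (rule integrable_spike_set) (rule negligible_subset[OF neg], blast)+
  qed
  have "h integrable_on ({a..b} - S)"
  proof (rule measurable_bounded_by_integrable_imp_integrable[OF hm Mi _ L])
    fix x assume "x \<in> {a..b} - S" then show "norm (h x) \<le> M" using bnd by blast
  qed
  then show ?thesis
    by (rule integrable_spike_set) (rule negligible_subset[OF neg], blast)+
qed

lemma decr_within:
  fixes h :: "real \<Rightarrow> real"
  assumes "a \<le> b"
    and d: "\<And>x. x \<in> {a..b} \<Longrightarrow> (h has_real_derivative h' x) (at x within {a..b})"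
    and n: "\<And>x. x \<in> {a..b} \<Longrightarrow> h' x \<le> 0"
  shows "h b \<le> h a"
proof -
  have "(h' has_integral (h b - h a)) {a..b}"
    using d by (intro fundamental_theorem_of_calculus[OF assms(1)])
       (simp add: has_real_derivative_iff_has_vector_derivative)
  moreover have "((\<lambda>_. 0::real) has_integral 0) {a..b}" by simp
  ultimately have "h b - h a \<le> 0" using n by (rule has_integral_le)
  then show ?thesis by simp
qed

lemma gronwall0:
  fixes e :: "real \<Rightarrow> real"
  assumes "a \<le> b" and ec: "continuous_on {a..b} e" and e0: "\<And>t. t \<in> {a..b} \<Longrightarrow> 0 \<le> e t"
    and K: "K \<ge> 0" and le: "\<And>t. t \<in> {a..b} \<Longrightarrow> e t \<le> K * integral {a..t} e"
  shows "\<And>t. t \<in> {a..b} \<Longrightarrow> e t = 0"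
proof -
  fix t assume t: "t \<in> {a..b}"
  define g where "g s = integral {a..s} e" for s
  have gd: "(g has_real_derivative e s) (at s within {a..t})" if "s \<in> {a..t}" for s
  proof -
    have "(g has_vector_derivative e s) (at s within {a..b})"
      unfolding g_def using integral_has_vector_derivative[OF ec] that t by auto
    then have "(g has_vector_derivative e s) (at s within {a..t})"
      by (rule has_vector_derivative_within_subset) (use t in auto)
    then show ?thesis by (simp add: has_real_derivative_iff_has_vector_derivative)
  qed
  define h where "h s = exp (- K * s) * g s" for s
  have hd: "(h has_real_derivative (exp (- K * s) * (e s - K * g s))) (at s within {a..t})"
    if "s \<in> {a..t}" for s
  proof -
    have "((\<lambda>s. exp (- K * s)) has_real_derivative (exp (- K * s) * (- K))) (at s within {a..t})"
      by (rule derivative_eq_intros refl)+ simp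
    from DERIV_mult[OF this gd[OF that]] show ?thesis
      unfolding h_def by (simp add: algebra_simps)
  qed
  have "h t \<le> h a"
  proof (rule decr_within[OF _ hd])
    show "a \<le> t" using t by simp
    fix s assume s: "s \<in> {a..t}"
    have "e s - K * g s \<le> 0" using le[of s] s t by (auto simp: g_def)
    then show "exp (- K * s) * (e s - K * g s) \<le> 0"
      by (simp add: mult_nonneg_nonpos)
  qed
  then have "exp (- K * t) * g t \<le> 0" by (simp add: h_def g_def)
  then have g1: "g t \<le> 0" by (simp add: mult_le_0_iff)
  have "g t \<ge> 0" unfolding g_def
    using e0 t by (intro integral_nonneg integrable_continuous_real continuous_on_subset[OF ec]) auto
  then have "g t = 0" using g1 by simp
  then show "e t = 0" using le[OF t] e0[OF t] by (simp add: g_def)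
qed

lemma lin_decay:
  fixes X :: "real \<Rightarrow> 'b::banach"
  assumes "a \<le> b" "finite S" and Xc: "continuous_on {a..b} X" and Qc: "continuous_on {a..b} Q"
    and Q0: "Q a = 0"
    and Qd: "\<And>t. t \<in> {a<..<b} - S \<Longrightarrow> (Q has_real_derivative k t) (at t)"
    and Xd: "\<And>t. t \<in> {a<..<b} - S \<Longrightarrow> (X has_vector_derivative (- (c * k t)) *\<^sub>R X t) (at t)"
  shows "X b = exp (- (c * Q b)) *\<^sub>R X a"
proof -
  define H where "H t = exp (c * Q t) *\<^sub>R X t" for t
  have "((\<lambda>_. 0) has_integral (H b - H a)) {a..b}"
  proof (rule fundamental_theorem_of_calculus_interior_strong[OF assms(2) assms(1)])
    fix t assume t: "t \<in> {a<..<b} - S"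
    have "(H has_vector_derivative (exp (c * Q t) * (c * k t)) *\<^sub>R X t + exp (c * Q t) *\<^sub>R ((- (c * k t)) *\<^sub>R X t)) (at t)"
      unfolding H_def
      using Qd[OF t] Xd[OF t]
      by (auto intro!: derivative_eq_intros simp: has_real_derivative_iff_has_vector_derivative[symmetric])
    then show "(H has_vector_derivative 0) (at t)"
      by (simp add: algebra_simps)
  next
    show "continuous_on {a..b} H" unfolding H_def
      by (intro continuous_intros Xc Qc)
  qed
  then have "H b = H a" by (metis has_integral_0 has_integral_unique eq_iff_diff_eq_0)
  then have "exp (c * Q b) *\<^sub>R X b = X a" by (simp add: H_def Q0)
  then have "exp (- (c * Q b)) *\<^sub>R (exp (c * Q b) *\<^sub>R X b) = exp (- (c * Q b)) *\<^sub>R X a" by simp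
  moreover have "exp (- (c * Q b)) * exp (c * Q b) = 1" by (simp add: exp_add[symmetric])
  ultimately show ?thesis by simp
qed

lemma integral_pow0:
  assumes "c \<ge> 0"
  shows "integral {0..c} (\<lambda>s::real. s ^ m) = c ^ (Suc m) / real (Suc m)"
proof -
  have "((\<lambda>s::real. s ^ m) has_integral (c ^ Suc m / real (Suc m) - 0 ^ Suc m / real (Suc m))) {0..c}"
    apply (rule fundamental_theorem_of_calculus[OF assms])
    apply (rule has_vector_derivative_at_within)
    apply (rule has_real_derivative_iff_has_vector_derivative[THEN iffD1])
    apply (rule derivative_eq_intros refl | simp)+
    done
  then show ?thesis by (simp add: integral_unique)
qed




definition Fv :: "real \<Rightarrow> (real \<Rightarrow> real) \<Rightarrow> real \<Rightarrow> 'a::real_inner \<Rightarrow> 'a \<Rightarrow> 'a" where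
  "Fv alpha f theta x w = (alpha * f (inner w x - theta) * inner w x) *\<^sub>R (x - inner w x *\<^sub>R w)"

lemma stim_sig: "stim DT tau x t = sig DT tau t *\<^sub>R x"
  by (simp add: stim_def sig_def)

lemma rhs_sig:
  assumes "sig DT tau t = 0 \<or> sig DT tau t = 1"
  shows "rhs alpha f theta DT tau x t w = sig DT tau t *\<^sub>R Fv alpha f theta x w"
  using assms by (auto simp: rhs_def Fv_def stim_sig vout_def yout_def)

lemma qint_sig:
  assumes "sig DT tau t = 0 \<or> sig DT tau t = 1"
  shows "vout f (stim DT tau x t) w theta * (inner (stim DT tau x t) w)\<^sup>2
        = sig DT tau t * (f (inner w x - theta) * (inner w x)\<^sup>2)"
  using assms by (auto simp: stim_sig vout_def yout_def inner_commute)

lemma Fv_cont: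
  assumes "continuous_on UNIV f"
  shows "continuous_on S (Fv alpha f theta x)"
proof -
  have c1: "continuous_on S (\<lambda>w. inner w x - theta)"
    by (intro continuous_on_diff continuous_on_inner continuous_on_id continuous_on_const)
  have "continuous_on S (\<lambda>w. f (inner w x - theta))"
    by (rule continuous_on_compose2[OF assms c1]) simp
  then show ?thesis unfolding Fv_def by (intro continuous_intros)
qed

lemma f_lip_compact:
  assumes loc: "\<And>u. \<exists>e>0. \<exists>K. K-lipschitz_on (cball u e) f" and "compact X"
  shows "\<exists>K. K-lipschitz_on X (f::real\<Rightarrow>real)"
proof -
  have ll: "local_lipschitz {0::real} X (\<lambda>_. f)"
  proof (rule local_lipschitzI)
    fix t x assume "t \<in> {0::real}" "x \<in> X"
    obtain e K where "e > 0" "K-lipschitz_on (cball x e) f" using loc by blast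
    then show "\<exists>u>0. \<exists>L. \<forall>t\<in>cball t u \<inter> {0}. L-lipschitz_on (cball x u \<inter> X) ((\<lambda>_. f) t)"
      by (intro exI[of _ e] conjI exI[of _ K]) (auto intro: lipschitz_on_subset)
  qed
  obtain L where "\<And>t. t \<in> {0::real} \<Longrightarrow> L-lipschitz_on X ((\<lambda>_. f) t)"
    using local_lipschitz_compact_implies_lipschitz[OF ll assms(2) compact_sing] by auto
  then show ?thesis by auto
qed

lemma prod_lip:
  fixes g :: "'a \<Rightarrow> real" and h :: "'a \<Rightarrow> 'b::real_normed_vector"
  assumes "a \<in> A" "b \<in> A"
    and g: "\<And>u v. u \<in> A \<Longrightarrow> v \<in> A \<Longrightarrow> \<bar>g u - g v\<bar> \<le> K1 * d u v"
    and h: "\<And>u v. u \<in> A \<Longrightarrow> v \<in> A \<Longrightarrow> norm (h u - h v) \<le> K2 * d u v"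
    and gb: "\<And>u. u \<in> A \<Longrightarrow> \<bar>g u\<bar> \<le> M1"
    and hb: "\<And>u. u \<in> A \<Longrightarrow> norm (h u) \<le> M2"
  shows "norm (g a *\<^sub>R h a - g b *\<^sub>R h b) \<le> (K1 * M2 + M1 * K2) * d a b"
proof -
  have "g a *\<^sub>R h a - g b *\<^sub>R h b = (g a - g b) *\<^sub>R h a + g b *\<^sub>R (h a - h b)"
    by (simp add: algebra_simps)
  then have "norm (g a *\<^sub>R h a - g b *\<^sub>R h b) \<le> \<bar>g a - g b\<bar> * norm (h a) + \<bar>g b\<bar> * norm (h a - h b)"
    by (metis norm_scaleR norm_triangle_ineq)
  also have "\<bar>g a - g b\<bar> * norm (h a) \<le> (K1 * d a b) * M2"
    using g[OF assms(1,2)] hb[OF assms(1)] by (intro mult_mono) auto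
  also have "\<bar>g b\<bar> * norm (h a - h b) \<le> M1 * (K2 * d a b)"
    using gb[OF assms(2)] h[OF assms(1,2)] by (intro mult_mono) auto
  finally show ?thesis by (simp add: algebra_simps)
qed

lemma Fv_lip:
  fixes x :: "'a::euclidean_space"
  assumes fc: "continuous_on UNIV f" and loc: "\<And>u. \<exists>e>0. \<exists>K. K-lipschitz_on (cball u e) f"
    and R: "R \<ge> 0"
  shows "\<exists>C\<ge>0. \<forall>a\<in>cball 0 R. \<forall>b\<in>cball 0 R. norm (Fv alpha f theta x a - Fv alpha f theta x b) \<le> C * norm (a - b)"
proof -
  define Y where "Y = R * norm x"
  define I where "I = {- Y - theta .. Y - theta}"
  obtain Kf where Kf: "Kf-lipschitz_on I f" using f_lip_compact[OF loc, of I] by (auto simp: I_def)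
  have "compact (f ` I)" unfolding I_def
    by (rule compact_continuous_image) (auto intro: continuous_on_subset[OF fc])
  then obtain Mf where Mf: "\<And>u. u \<in> I \<Longrightarrow> \<bar>f u\<bar> \<le> Mf"
    using compact_imp_bounded bounded_iff by (metis image_eqI real_norm_def)
  define A where "A = cball (0::'a) R"
  define y where "y w = inner w x" for w
  have yb: "\<bar>y w\<bar> \<le> Y" if "w \<in> A" for w
  proof -
    have "\<bar>y w\<bar> \<le> norm w * norm x" unfolding y_def by (rule Cauchy_Schwarz_ineq2)
    also have "\<dots> \<le> R * norm x" using that by (intro mult_right_mono) (auto simp: A_def)
    finally show ?thesis by (simp add: Y_def)
  qed
  have yl: "\<bar>y u - y v\<bar> \<le> norm x * norm (u - v)" for u v
  proof -
    have "\<bar>y u - y v\<bar> = \<bar>inner (u - v) x\<bar>" by (simp add: y_def inner_diff_left)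
    also have "\<dots> \<le> norm (u - v) * norm x" by (rule Cauchy_Schwarz_ineq2)
    finally show ?thesis by (simp add: mult.commute)
  qed
  have yI: "y w - theta \<in> I" if "w \<in> A" for w
    using yb[OF that] by (auto simp: I_def)
  have g1l: "\<bar>f (y u - theta) - f (y v - theta)\<bar> \<le> (Kf * norm x) * norm (u - v)"
    if "u \<in> A" "v \<in> A" for u v
  proof -
    have "\<bar>f (y u - theta) - f (y v - theta)\<bar> \<le> Kf * dist (y u - theta) (y v - theta)"
      using lipschitz_onD[OF Kf yI[OF that(1)] yI[OF that(2)]] by (simp add: dist_real_def)
    also have "\<dots> \<le> Kf * (norm x * norm (u - v))"
      using yl[of u v] lipschitz_on_nonneg[OF Kf] by (intro mult_left_mono) (auto simp: dist_real_def)
    finally show ?thesis by simp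
  qed
  have Mf0: "Mf \<ge> 0" using Mf[OF yI[of 0]] by (auto simp: A_def R)
  have Y0: "Y \<ge> 0" using R by (simp add: Y_def)
  define phi where "phi w = alpha * (f (y w - theta) * y w)" for w
  have phil: "\<bar>phi u - phi v\<bar> \<le> (\<bar>alpha\<bar> * ((Kf * norm x) * Y + Mf * norm x)) * norm (u - v)"
    if "u \<in> A" "v \<in> A" for u v
  proof -
    have "norm ((f (y u - theta)) *\<^sub>R y u - (f (y v - theta)) *\<^sub>R y v) \<le> ((Kf * norm x) * Y + Mf * norm x) * norm (u - v)"
      by (rule prod_lip[OF that, where d = "\<lambda>u v. norm (u - v)"])
         (auto simp: g1l yl yb Mf yI)
    then have "\<bar>f (y u - theta) * y u - f (y v - theta) * y v\<bar> \<le> ((Kf * norm x) * Y + Mf * norm x) * norm (u - v)"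
      by simp
    then have "\<bar>alpha\<bar> * \<bar>f (y u - theta) * y u - f (y v - theta) * y v\<bar> \<le> \<bar>alpha\<bar> * (((Kf * norm x) * Y + Mf * norm x) * norm (u - v))"
      by (intro mult_left_mono) auto
    then show ?thesis by (simp add: phi_def abs_mult[symmetric] algebra_simps)
  qed
  have phib: "\<bar>phi u\<bar> \<le> \<bar>alpha\<bar> * (Mf * Y)" if "u \<in> A" for u
  proof -
    have "\<bar>f (y u - theta) * y u\<bar> \<le> Mf * Y"
      unfolding abs_mult using Mf[OF yI[OF that]] yb[OF that] Mf0 by (intro mult_mono) auto
    then show ?thesis unfolding phi_def abs_mult by (intro mult_left_mono) auto
  qed
  define psi where "psi w = x - y w *\<^sub>R w" for w
  have psil: "norm (psi u - psi v) \<le> (norm x * R + Y) * norm (u - v)" if "u \<in> A" "v \<in> A" for u v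
  proof -
    have "norm (y u *\<^sub>R u - y v *\<^sub>R v) \<le> (norm x * R + Y * 1) * norm (u - v)"
      by (rule prod_lip[OF that, where d = "\<lambda>u v. norm (u - v)"])
         (auto simp: yl yb A_def)
    moreover have "psi u - psi v = - (y u *\<^sub>R u - y v *\<^sub>R v)" by (simp add: psi_def algebra_simps)
    ultimately show ?thesis by (simp add: norm_minus_commute)
  qed
  have psib: "norm (psi u) \<le> norm x + Y * R" if "u \<in> A" for u
  proof -
    have "norm (psi u) \<le> norm x + norm (y u *\<^sub>R u)" unfolding psi_def by (rule norm_triangle_ineq4)
    also have "norm (y u *\<^sub>R u) \<le> Y * R"
      using yb[OF that] that Y0 by (auto simp: A_def intro!: mult_mono)
    finally show ?thesis by simp
  qed
  have Fe: "Fv alpha f theta x w = phi w *\<^sub>R psi w" for w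
    by (simp add: Fv_def phi_def psi_def y_def mult.assoc)
  define C where "C = (\<bar>alpha\<bar> * ((Kf * norm x) * Y + Mf * norm x)) * (norm x + Y * R) + (\<bar>alpha\<bar> * (Mf * Y)) * (norm x * R + Y)"
  have "norm (Fv alpha f theta x a - Fv alpha f theta x b) \<le> C * norm (a - b)"
    if "a \<in> A" "b \<in> A" for a b
    unfolding Fe C_def
    by (rule prod_lip[OF that, where d = "\<lambda>u v. norm (u - v)"]) (auto simp: phil psil phib psib)
  moreover have "C \<ge> 0" unfolding C_def using Mf0 Y0 R lipschitz_on_nonneg[OF Kf]
    by (intro add_nonneg_nonneg mult_nonneg_nonneg) auto
  ultimately show ?thesis unfolding A_def by blast
qed

lemma Fv_bound:
  fixes x :: "'a::euclidean_space"
  assumes fc: "continuous_on UNIV f"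
  shows "\<exists>M\<ge>0. \<forall>a\<in>cball 0 R. norm (Fv alpha f theta x a) \<le> M"
proof -
  have "compact (Fv alpha f theta x ` cball 0 R)"
    by (rule compact_continuous_image[OF Fv_cont[OF fc]]) simp
  then obtain M where "\<forall>a\<in>cball 0 R. norm (Fv alpha f theta x a) \<le> M"
    using compact_imp_bounded bounded_iff by (metis image_eqI)
  then show ?thesis by (intro exI[of _ "max M 0"]) auto
qed

definition cut :: "real \<Rightarrow> 'a::real_normed_vector \<Rightarrow> real" where
  "cut R w = max 0 (min 1 (2 - norm w / R))"

lemma cut_lip:
  assumes "R > 0"
  shows "\<bar>cut R a - cut R b\<bar> \<le> (1 / R) * norm (a - b)"
proof -
  have cl: "\<bar>max 0 (min 1 u) - max 0 (min 1 v)\<bar> \<le> \<bar>u - v\<bar>" for u v :: real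
    by (auto simp: max_def min_def abs_if)
  have "\<bar>cut R a - cut R b\<bar> \<le> \<bar>(2 - norm a / R) - (2 - norm b / R)\<bar>"
    unfolding cut_def by (rule cl)
  also have "\<dots> = \<bar>norm b - norm a\<bar> / R"
  proof -
    have "(2 - norm a / R) - (2 - norm b / R) = (norm b - norm a) / R" by (simp add: diff_divide_distrib)
    then show ?thesis using assms by (simp add: abs_divide)
  qed
  also have "\<dots> \<le> norm (a - b) / R" using assms
    by (intro divide_right_mono) (auto simp: norm_minus_commute intro: norm_triangle_ineq3[of b a, simplified norm_minus_commute])
  finally show ?thesis by simp
qed

lemma cut_props:
  assumes "R > 0"
  shows "0 \<le> cut R w" "cut R w \<le> 1" "norm w \<le> R \<Longrightarrow> cut R w = 1" "norm w \<ge> 2 * R \<Longrightarrow> cut R w = 0"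
  using assms by (auto simp: cut_def field_simps)




lemma vd_inner:
  fixes u v :: "real \<Rightarrow> 'a::real_inner"
  assumes "(u has_vector_derivative u') (at t within S)" "(v has_vector_derivative v') (at t within S)"
  shows "((\<lambda>s. inner (u s) (v s)) has_real_derivative (inner (u t) v' + inner u' (v t))) (at t within S)"
proof -
  have "((\<lambda>s. inner (u s) (v s)) has_derivative (\<lambda>h. inner (u t) (h *\<^sub>R v') + inner (h *\<^sub>R u') (v t))) (at t within S)"
    using has_derivative_inner[OF assms[unfolded has_vector_derivative_def]] by simp
  then show ?thesis unfolding has_field_derivative_def
    by (rule has_derivative_eq_rhs) (auto simp: fun_eq_iff algebra_simps)
qed

lemma G_lip:
  fixes x :: "'a::euclidean_space"
  assumes fc: "continuous_on UNIV f" and loc: "\<And>u. \<exists>e>0. \<exists>K. K-lipschitz_on (cball u e) f"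
    and R: "R > 0"
  shows "\<exists>L\<ge>0. \<forall>a b. norm (cut R a *\<^sub>R Fv alpha f theta x a - cut R b *\<^sub>R Fv alpha f theta x b) \<le> L * norm (a - b)"
proof -
  obtain C where C: "C \<ge> 0" "\<forall>a\<in>cball 0 (2*R). \<forall>b\<in>cball 0 (2*R). norm (Fv alpha f theta x a - Fv alpha f theta x b) \<le> C * norm (a - b)"
    using Fv_lip[OF fc loc, of "2*R" alpha theta x] R by auto
  obtain M where M: "M \<ge> 0" "\<forall>a\<in>cball 0 (2*R). norm (Fv alpha f theta x a) \<le> M"
    using Fv_bound[OF fc, of "2*R" alpha theta x] by auto
  define G where "G w = cut R w *\<^sub>R Fv alpha f theta x w" for w
  define L where "L = (1 / R) * M + 1 * C"
  have L0: "L \<ge> 0" using C M R by (simp add: L_def)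
  have cb: "\<bar>cut R w\<bar> \<le> 1" for w :: 'a using cut_props(1,2)[OF R, of w] by simp
  have out: "norm (G a - G b) \<le> L * norm (a - b)" if a: "norm a > 2 * R" for a b
  proof -
    have ca: "cut R a = 0" using cut_props(4)[OF R, of a] a by simp
    show ?thesis
    proof (cases "norm b \<le> 2 * R")
      case True
      have "norm (G a - G b) = cut R b * norm (Fv alpha f theta x b)"
        using ca cut_props(1)[OF R, of b] by (simp add: G_def)
      also have "\<dots> \<le> cut R b * M"
        using M True cut_props(1)[OF R, of b] by (intro mult_left_mono) auto
      also have "cut R b = \<bar>cut R a - cut R b\<bar>" using ca cut_props(1)[OF R, of b] by simp
      also have "\<bar>cut R a - cut R b\<bar> * M \<le> ((1 / R) * norm (a - b)) * M"
        using cut_lip[OF R, of a b] M by (intro mult_right_mono) auto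
      also have "\<dots> \<le> L * norm (a - b)"
        unfolding L_def using C by (simp add: algebra_simps)
      finally show ?thesis .
    next
      case False
      then have "cut R b = 0" using cut_props(4)[OF R, of b] by simp
      then show ?thesis using ca L0 by (simp add: G_def)
    qed
  qed
  have "norm (G a - G b) \<le> L * norm (a - b)" for a b
  proof (cases "norm a \<le> 2 * R \<and> norm b \<le> 2 * R")
    case True
    show ?thesis unfolding G_def L_def
      by (rule prod_lip[where A = "cball 0 (2*R)" and d = "\<lambda>u v. norm (u - v)"])
        (use True C M cut_lip[OF R] cut_props[OF R] cb in auto)
  next
    case False
    then have "\<not> norm a \<le> 2 * R \<or> \<not> norm b \<le> 2 * R" by blast
    then show ?thesis
    proof
      assume "\<not> norm a \<le> 2 * R" then show ?thesis using out by simp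
    next
      assume "\<not> norm b \<le> 2 * R"
      then have "norm (G b - G a) \<le> L * norm (b - a)" using out by simp
      then show ?thesis by (simp add: norm_minus_commute)
    qed
  qed
  then show ?thesis using L0 unfolding G_def by blast
qed

lemma picard:
  fixes G :: "'a::euclidean_space \<Rightarrow> 'a"
  assumes lip: "\<And>a b. norm (G a - G b) \<le> L * norm (a - b)" and L: "L \<ge> 0" and S: "S \<ge> 0"
  shows "\<exists>u. u 0 = p \<and> (\<forall>t\<in>{0..S}. (u has_vector_derivative G (u t)) (at t within {0..S}))"
proof -
  have Gc: "continuous_on UNIV G"
    by (rule lipschitz_on_continuous_on[of L]) (use lip L in \<open>auto intro!: lipschitz_onI simp: dist_norm\<close>)
  define clip where "clip t = max 0 (min S t)" for t :: real
  have clip_in: "clip t \<in> {0..S}" for t using S by (auto simp: clip_def)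
  have clip_id: "t \<in> {0..S} \<Longrightarrow> clip t = t" for t by (auto simp: clip_def)
  have clip_c: "continuous_on UNIV clip" unfolding clip_def by (intro continuous_intros)
  define P where "P v t = p + integral {0..clip t} (\<lambda>s. G (apply_bcontfun v s))" for v :: "real \<Rightarrow>\<^sub>C 'a" and t
  have Gvc: "continuous_on A (\<lambda>s. G (apply_bcontfun v s))" for v :: "real \<Rightarrow>\<^sub>C 'a" and A
    by (rule continuous_on_compose2[OF Gc]) auto
  have Iv: "(\<lambda>s. G (apply_bcontfun v s)) integrable_on {a..b}" for v :: "real \<Rightarrow>\<^sub>C 'a" and a b
    by (rule integrable_continuous_real[OF Gvc])
  have Pbc: "P v \<in> bcontfun" for v
  proof -
    define I where "I r = p + integral {0..r} (\<lambda>s. G (apply_bcontfun v s))" for r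
    have Ic: "continuous_on {0..S} I" unfolding I_def
      by (intro continuous_intros indefinite_integral_continuous_1 Iv)
    have "continuous_on UNIV (\<lambda>t. I (clip t))"
      by (rule continuous_on_compose2[OF Ic clip_c]) (use clip_in in auto)
    moreover have "bounded (range (\<lambda>t. I (clip t)))"
    proof (rule bounded_subset)
      show "bounded (I ` {0..S})" by (intro compact_imp_bounded compact_continuous_image Ic) simp
      show "range (\<lambda>t. I (clip t)) \<subseteq> I ` {0..S}" using clip_in by auto
    qed
    ultimately show ?thesis unfolding bcontfun_def P_def I_def by auto
  qed
  define Psi where "Psi v = Bcontfun (P v)" for v
  have app: "apply_bcontfun (Psi v) t = P v t" for v t
    by (simp add: Psi_def Bcontfun_inverse[OF Pbc])
  have key: "dist (apply_bcontfun ((Psi ^^ m) v) t) (apply_bcontfun ((Psi ^^ m) w) t)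
      \<le> (L * clip t) ^ m / fact m * dist v w" for m v w t
  proof (induction m arbitrary: t)
    case 0 then show ?case by (simp add: dist_bounded)
  next
    case (Suc m)
    define A where "A = (Psi ^^ m) v"
    define B where "B = (Psi ^^ m) w"
    define c where "c = clip t"
    have c: "0 \<le> c" "c \<le> S" using clip_in[of t] by (auto simp: c_def)
    have "dist (apply_bcontfun ((Psi ^^ Suc m) v) t) (apply_bcontfun ((Psi ^^ Suc m) w) t)
        = norm (integral {0..c} (\<lambda>s. G (apply_bcontfun A s)) - integral {0..c} (\<lambda>s. G (apply_bcontfun B s)))"
      by (simp add: app A_def B_def P_def c_def dist_norm)
    also have "\<dots> = norm (integral {0..c} (\<lambda>s. G (apply_bcontfun A s) - G (apply_bcontfun B s)))"
      by (simp add: integral_diff[OF Iv Iv])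
    also have "\<dots> \<le> integral {0..c} (\<lambda>s. (L ^ Suc m * dist v w / fact m) * s ^ m)"
    proof (rule integral_norm_bound_integral)
      show "(\<lambda>s. G (apply_bcontfun A s) - G (apply_bcontfun B s)) integrable_on {0..c}"
        by (intro integrable_diff Iv)
      show "(\<lambda>s. (L ^ Suc m * dist v w / fact m) * s ^ m) integrable_on {0..c}"
        by (intro integrable_continuous_real continuous_intros)
      fix s assume s: "s \<in> {0..c}"
      then have cs: "clip s = s" using c by (intro clip_id) auto
      have "norm (G (apply_bcontfun A s) - G (apply_bcontfun B s)) \<le> L * dist (apply_bcontfun A s) (apply_bcontfun B s)"
        using lip by (simp add: dist_norm)
      also have "\<dots> \<le> L * ((L * clip s) ^ m / fact m * dist v w)"
        using Suc.IH[of s] L unfolding A_def B_def by (intro mult_left_mono) auto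
      also have "\<dots> = (L ^ Suc m * dist v w / fact m) * s ^ m"
        by (simp add: cs power_mult_distrib field_simps)
      finally show "norm (G (apply_bcontfun A s) - G (apply_bcontfun B s)) \<le> (L ^ Suc m * dist v w / fact m) * s ^ m" .
    qed
    also have "\<dots> = (L ^ Suc m * dist v w / fact m) * (c ^ Suc m / real (Suc m))"
      by (simp add: integral_pow0[OF c(1)])
    also have "\<dots> = (L * clip t) ^ Suc m / fact (Suc m) * dist v w"
      by (simp add: c_def power_mult_distrib field_simps)
    finally show ?case .
  qed
  have "(\<lambda>n. inverse (fact n) * (L * S) ^ n) \<longlonglongrightarrow> 0"
    by (rule summable_LIMSEQ_zero[OF summable_exp])
  then have "\<forall>\<^sub>F n in sequentially. inverse (fact n) * (L * S) ^ n < 1"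
    by (rule order_tendstoD) simp
  then obtain m where m: "inverse (fact m) * (L * S) ^ m < 1"
    unfolding eventually_sequentially by blast
  define k where "k = (L * S) ^ m / fact m"
  have k: "0 \<le> k" "k < 1" using m L S by (auto simp: k_def field_simps)
  have contr: "\<forall>v w. dist ((Psi ^^ m) v) ((Psi ^^ m) w) \<le> k * dist v w"
  proof (intro allI dist_bound)
    fix v w :: "real \<Rightarrow>\<^sub>C 'a" and t :: real
    have "(L * clip t) ^ m \<le> (L * S) ^ m"
      using clip_in[of t] L by (intro power_mono mult_left_mono) auto
    then have "(L * clip t) ^ m / fact m * dist v w \<le> k * dist v w"
      unfolding k_def by (intro mult_right_mono divide_right_mono) auto
    then show "dist (apply_bcontfun ((Psi ^^ m) v) t) (apply_bcontfun ((Psi ^^ m) w) t) \<le> k * dist v w"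
      using key[of m v t w] by linarith
  qed
  obtain u where u: "(Psi ^^ m) u = u" and uniq: "\<And>z. (Psi ^^ m) z = z \<Longrightarrow> z = u"
    using banach_fix_type[OF k contr] by metis
  have "(Psi ^^ m) (Psi u) = Psi u" by (metis funpow_swap1 u)
  then have fixu: "Psi u = u" by (rule uniq)
  define U where "U t = apply_bcontfun u t" for t
  have Ueq: "U t = p + integral {0..t} (\<lambda>s. G (U s))" if "t \<in> {0..S}" for t
    using app[of u t] fixu clip_id[OF that] by (simp add: U_def P_def)
  have "U 0 = p" using Ueq[of 0] S by simp
  moreover have "(U has_vector_derivative G (U t)) (at t within {0..S})" if t: "t \<in> {0..S}" for t
  proof -
    have d1: "((\<lambda>r. integral {0..r} (\<lambda>s. G (U s))) has_vector_derivative G (U t)) (at t within {0..S})"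
      by (rule integral_has_vector_derivative[OF _ t]) (simp add: U_def Gvc)
    have "((\<lambda>r. p + integral {0..r} (\<lambda>s. G (U s))) has_vector_derivative G (U t)) (at t within {0..S})"
      using has_vector_derivative_add[OF has_vector_derivative_const[of p] d1] by simp
    then show ?thesis
      by (rule has_vector_derivative_transform[OF t, rotated]) (simp add: Ueq)
  qed
  ultimately show ?thesis by blast
qed




lemma inner_Fv:
  "inner w (Fv alpha f theta x w) = - (alpha * f (inner w x - theta) * (inner w x)\<^sup>2) * (inner w w - 1)"
  by (simp add: Fv_def inner_diff_right algebra_simps power2_eq_square inner_commute)

lemma solves_on_mono:
  "solves_on F t0 w0 A w \<Longrightarrow> B \<subseteq> A \<Longrightarrow> solves_on F t0 w0 B w"
  unfolding solves_on_def by (auto intro: continuous_on_subset)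

lemma p_alg:
  fixes x w :: "'a::real_inner"
  assumes n: "inner x x \<noteq> 0"
  shows "s *\<^sub>R Fv alpha f theta x w - (inner (s *\<^sub>R Fv alpha f theta x w) x / inner x x) *\<^sub>R x
     = - (alpha * (s * (f (inner w x - theta) * (inner w x)\<^sup>2))) *\<^sub>R (w - (inner w x / inner x x) *\<^sub>R x)"
proof -
  define y where "y = inner w x"
  define n2 where "n2 = inner x x"
  define c where "c = s * (alpha * f (y - theta) * y)"
  have n2: "n2 \<noteq> 0" using n by (simp add: n2_def)
  have F: "s *\<^sub>R Fv alpha f theta x w = c *\<^sub>R x - (c * y) *\<^sub>R w"
    by (simp add: Fv_def c_def y_def algebra_simps)
  have I: "inner (s *\<^sub>R Fv alpha f theta x w) x = c * n2 - c * y * y"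
    unfolding F by (simp add: inner_diff_left y_def n2_def)
  have "c - (c * n2 - c * y * y) / n2 = c * y * y / n2" using n2 by (simp add: field_simps)
  then have "s *\<^sub>R Fv alpha f theta x w - (inner (s *\<^sub>R Fv alpha f theta x w) x / inner x x) *\<^sub>R x
      = (c * y * y / n2) *\<^sub>R x - (c * y) *\<^sub>R w"
    unfolding I n2_def[symmetric] unfolding F by (simp add: algebra_simps flip: scaleR_diff_left)
  also have "\<dots> = - (c * y) *\<^sub>R (w - (y / n2) *\<^sub>R x)"
    by (simp add: algebra_simps)
  finally show ?thesis by (simp add: c_def y_def n2_def power2_eq_square mult.assoc mult.left_commute)
qed

lemma y2_alg:
  fixes x w :: "'a::real_inner"
  assumes n: "inner x x \<noteq> 0"
  shows "(inner w x)\<^sup>2 = inner x x * (inner w w - inner (w - (inner w x / inner x x) *\<^sub>R x) (w - (inner w x / inner x x) *\<^sub>R x))"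
proof -
  define y where "y = inner w x"
  define n2 where "n2 = inner x x"
  have n2: "n2 \<noteq> 0" using n by (simp add: n2_def)
  have "inner (w - (y / n2) *\<^sub>R x) (w - (y / n2) *\<^sub>R x) = inner w w - 2 * (y / n2) * y + (y / n2) * (y / n2) * n2"
    by (simp add: inner_diff_left inner_diff_right y_def n2_def inner_commute algebra_simps)
  also have "\<dots> = inner w w - y * y / n2" using n2 by (simp add: field_simps)
  finally show ?thesis using n2 unfolding y_def[symmetric] n2_def[symmetric]
    by (simp add: field_simps power2_eq_square)
qed

context
  fixes DT :: real and tau :: "nat \<Rightarrow> real" and f :: "real \<Rightarrow> real" and alpha theta :: real
    and x :: "'a::euclidean_space"
  assumes DT_pos: "DT > 0" and tau_sep: "\<And>j. tau (Suc j) > tau j + DT"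
    and fc: "continuous_on UNIV f" and loc: "\<And>u. \<exists>e>0. \<exists>K. K-lipschitz_on (cball u e) f"
    and fnp: "\<And>u. u \<le> 0 \<Longrightarrow> f u = 0" and fpos: "\<And>u. u > 0 \<Longrightarrow> f u > 0" and ap: "alpha > 0"
begin

lemma fnn: "f u \<ge> 0"
  using fnp[of u] fpos[of u] by (cases "u \<le> 0") auto

lemmas sig01 = sig_01[of DT tau, OF DT_pos tau_sep]
lemmas sigb = sig_bounds[of DT tau, OF DT_pos tau_sep]
lemmas Dfin = Dset_finite[of DT tau, OF DT_pos tau_sep]
lemmas sigc = sig_isCont[of DT tau, OF DT_pos tau_sep]

lemma rhs_eq: "rhs alpha f theta DT tau x t w = sig DT tau t *\<^sub>R Fv alpha f theta x w"
  by (rule rhs_sig[OF sig01])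

lemma auto_sol:
  assumes S: "S \<ge> 0"
  shows "\<exists>\<Phi>. \<Phi> 0 = w0 \<and> (\<forall>t\<in>{0..S}. (\<Phi> has_vector_derivative Fv alpha f theta x (\<Phi> t)) (at t within {0..S}))"
proof -
  define R where "R = max (norm w0) 2"
  have R: "R > 0" by (simp add: R_def)
  obtain L where L: "L \<ge> 0" "\<forall>a b. norm (cut R a *\<^sub>R Fv alpha f theta x a - cut R b *\<^sub>R Fv alpha f theta x b) \<le> L * norm (a - b)"
    using G_lip[OF fc loc R] by blast
  define G where "G w = cut R w *\<^sub>R Fv alpha f theta x w" for w
  obtain u where u0: "u 0 = w0" and ud: "\<forall>t\<in>{0..S}. (u has_vector_derivative G (u t)) (at t within {0..S})"
    using picard[of G L S w0] L S unfolding G_def by blast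
  define V where "V s = inner (u s) (u s)" for s
  have inb: "norm (u t) \<le> R" if t: "t \<in> {0..S}" for t
  proof -
    have "(V t - 1) * (V t - 1) \<le> (V 0 - 1) * (V 0 - 1)"
    proof (rule decr_within[where h = "\<lambda>s. (V s - 1) * (V s - 1)"])
      show "0 \<le> t" using t by simp
      fix s assume s: "s \<in> {0..t}"
      have uds: "(u has_vector_derivative G (u s)) (at s within {0..t})"
        by (rule has_vector_derivative_within_subset[OF ud[rule_format]]) (use s t in auto)
      have Vd: "(V has_real_derivative (inner (u s) (G (u s)) + inner (G (u s)) (u s))) (at s within {0..t})"
        unfolding V_def by (rule vd_inner[OF uds uds])
      have "((\<lambda>s. (V s - 1) * (V s - 1)) has_real_derivative
          ((inner (u s) (G (u s)) + inner (G (u s)) (u s)) * (V s - 1) + (V s - 1) * (inner (u s) (G (u s)) + inner (G (u s)) (u s)))) (at s within {0..t})"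
        by (rule DERIV_cong[OF DERIV_mult[OF DERIV_diff[OF Vd DERIV_const[of "1::real"]] DERIV_diff[OF Vd DERIV_const[of "1::real"]]]]) simp
      then show "((\<lambda>s. (V s - 1) * (V s - 1)) has_real_derivative
          ((inner (u s) (G (u s)) + inner (G (u s)) (u s)) * (V s - 1) + (V s - 1) * (inner (u s) (G (u s)) + inner (G (u s)) (u s)))) (at s within {0..t})" .
      define k where "k = cut R (u s) * (alpha * f (inner (u s) x - theta) * (inner (u s) x)\<^sup>2)"
      have e: "inner (u s) (G (u s)) = - k * (V s - 1)"
        by (simp add: G_def inner_Fv V_def k_def)
      have k0: "0 \<le> k"
        unfolding k_def using cut_props(1)[OF R, of "u s"] fnn[of "inner (u s) x - theta"] ap
        by (intro mult_nonneg_nonneg) auto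
      have "(inner (u s) (G (u s)) + inner (G (u s)) (u s)) * (V s - 1) + (V s - 1) * (inner (u s) (G (u s)) + inner (G (u s)) (u s))
          = - (4 * k) * ((V s - 1) * (V s - 1))"
        unfolding inner_commute[of "G (u s)" "u s"] e by (simp add: algebra_simps)
      also have "\<dots> \<le> 0" using k0 by (simp add: mult_nonneg_nonneg)
      finally show "(inner (u s) (G (u s)) + inner (G (u s)) (u s)) * (V s - 1) + (V s - 1) * (inner (u s) (G (u s)) + inner (G (u s)) (u s)) \<le> 0" .
    qed
    then have "\<bar>V t - 1\<bar> \<le> \<bar>V 0 - 1\<bar>"
      by (metis abs_le_square_iff power2_eq_square)
    moreover have "V 0 \<le> R\<^sup>2" unfolding V_def u0 power2_norm_eq_inner[symmetric] R_def
      by (intro power_mono) auto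
    moreover have "4 \<le> R\<^sup>2" unfolding R_def
      using power_mono[of 2 "max (norm w0) 2" 2] by simp
    moreover have "V 0 \<ge> 0" by (simp add: V_def)
    ultimately have "V t \<le> R\<^sup>2" by (auto simp: abs_if split: if_split_asm)
    then have "(norm (u t))\<^sup>2 \<le> R\<^sup>2" by (simp add: V_def power2_norm_eq_inner)
    then show ?thesis using R by (simp add: abs_le_square_iff)
  qed
  have "(u has_vector_derivative Fv alpha f theta x (u t)) (at t within {0..S})" if "t \<in> {0..S}" for t
  proof -
    have "cut R (u t) = 1" using cut_props(3)[OF R] inb[OF that] by blast
    then show ?thesis using ud[rule_format, OF that] by (simp add: G_def)
  qed
  then show ?thesis using u0 by blast
qed


lemma sig_int: "sig DT tau integrable_on {a..b}"
  by (rule pc_integrable[OF Dfin[of a b], where M=1])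
     (use sigc sigb in \<open>auto simp: Dset_def\<close>)

lemma exists_T:
  assumes T: "T \<ge> t0"
  shows "\<exists>w. solves_on (rhs alpha f theta DT tau x) t0 w0 {t0..T} w"
proof -
  define N where "N t = integral {t0..t} (sig DT tau)" for t
  define Dt where "Dt = Dset DT tau \<inter> {t0..T}"
  have Dt: "finite Dt" unfolding Dt_def by (rule Dfin)
  have N0: "N t0 = 0" by (simp add: N_def)
  have Nb: "N t \<in> {0..T - t0}" if "t \<in> {t0..T}" for t
  proof -
    have "0 \<le> N t" unfolding N_def using sig_int sigb by (intro integral_nonneg) auto
    moreover have "N t \<le> integral {t0..t} (\<lambda>_. 1::real)" unfolding N_def
      using sig_int sigb by (intro integral_le) auto
    ultimately show ?thesis using that by auto
  qed
  have Nc: "continuous_on {t0..T} N" unfolding N_def by (rule indefinite_integral_continuous_1[OF sig_int])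
  obtain \<Phi> where \<Phi>0: "\<Phi> 0 = w0"
    and \<Phi>d: "\<And>t. t \<in> {0..T - t0} \<Longrightarrow> (\<Phi> has_vector_derivative Fv alpha f theta x (\<Phi> t)) (at t within {0..T - t0})"
    using auto_sol[of "T - t0" w0] T by auto
  have \<Phi>c: "continuous_on {0..T - t0} \<Phi>"
    using \<Phi>d has_vector_derivative_continuous continuous_on_eq_continuous_within by blast
  define w where "w t = \<Phi> (N t)" for t
  have wc: "continuous_on {t0..T} w" unfolding w_def
    by (rule continuous_on_compose2[OF \<Phi>c Nc]) (use Nb in auto)
  have wd: "(w has_vector_derivative sig DT tau t *\<^sub>R Fv alpha f theta x (w t)) (at t)"
    if t: "t \<in> {t0<..<T} - Dt" for t
  proof -
    have tD: "t \<notin> Dset DT tau" using t by (auto simp: Dt_def)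
    have t': "t \<in> {t0..T} - Dt" using t by auto
    have "(N has_vector_derivative sig DT tau t) (at t within {t0..T} - Dt)"
      unfolding N_def
      by (rule integral_has_vector_derivative_continuous_at[OF sig_int t' Dt])
         (rule continuous_within_subset[OF sigc[OF tD]], simp)
    moreover have "(\<Phi> has_vector_derivative Fv alpha f theta x (\<Phi> (N t))) (at (N t) within N ` ({t0..T} - Dt))"
      by (rule has_vector_derivative_within_subset[OF \<Phi>d[OF Nb]]) (use t' Nb in auto)
    ultimately have "(w has_vector_derivative sig DT tau t *\<^sub>R Fv alpha f theta x (w t)) (at t within {t0..T} - Dt)"
      unfolding w_def using vector_diff_chain_within[unfolded o_def] by blast
    then have "(w has_vector_derivative sig DT tau t *\<^sub>R Fv alpha f theta x (w t)) (at t within {t0<..<T} - Dt)"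
      by (rule has_vector_derivative_within_subset) auto
    moreover have "open ({t0<..<T} - Dt)" using Dt by (intro open_Diff finite_imp_closed) auto
    ultimately show ?thesis using t has_vector_derivative_within_open by blast
  qed
  have "solves_on (rhs alpha f theta DT tau x) t0 w0 {t0..T} w"
    unfolding solves_on_def
  proof (intro conjI ballI)
    show "w t0 = w0" by (simp add: w_def N0 \<Phi>0)
    show "continuous_on {t0..T} w" by (rule wc)
    fix t assume t: "t \<in> {t0..T}"
    have "((\<lambda>s. sig DT tau s *\<^sub>R Fv alpha f theta x (w s)) has_integral (w t - w t0)) {t0..t}"
      by (rule fundamental_theorem_of_calculus_interior_strong[OF Dt])
         (use t wd in \<open>auto intro: continuous_on_subset[OF wc]\<close>)
    then show "((\<lambda>\<tau>. rhs alpha f theta DT tau x \<tau> (w \<tau>)) has_integral (w t - w0)) {t0..t}"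
      by (simp add: rhs_eq w_def N0 \<Phi>0)
  qed
  then show ?thesis by blast
qed

lemma uniq:
  assumes u: "solves_on (rhs alpha f theta DT tau x) t0 w0 {t0..T} u"
    and v: "solves_on (rhs alpha f theta DT tau x) t0 w0 {t0..T} v"
    and t: "t \<in> {t0..T}"
  shows "u t = v t"
proof -
  have uc: "continuous_on {t0..T} u" and vc: "continuous_on {t0..T} v"
    using u v by (auto simp: solves_on_def)
  have "compact (u ` {t0..T})" by (intro compact_continuous_image uc) simp
  moreover have "compact (v ` {t0..T})" by (intro compact_continuous_image vc) simp
  ultimately have "bounded (u ` {t0..T} \<union> v ` {t0..T})"
    by (intro compact_imp_bounded compact_Un)
  then obtain R0 where R0: "\<And>z. z \<in> u ` {t0..T} \<union> v ` {t0..T} \<Longrightarrow> norm z \<le> R0"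
    by (auto simp: bounded_iff)
  define R where "R = max R0 0"
  have uR: "u s \<in> cball 0 R" "v s \<in> cball 0 R" if "s \<in> {t0..T}" for s
    using R0[of "u s"] R0[of "v s"] that by (auto simp: R_def)
  obtain C where C: "C \<ge> 0" "\<forall>a\<in>cball 0 R. \<forall>b\<in>cball 0 R. norm (Fv alpha f theta x a - Fv alpha f theta x b) \<le> C * norm (a - b)"
    using Fv_lip[OF fc loc, of R alpha theta x] by (auto simp: R_def)
  define e where "e s = norm (u s - v s)" for s
  have ec: "continuous_on {t0..T} e" unfolding e_def by (intro continuous_intros uc vc)
  have "e s = 0" if s: "s \<in> {t0..T}" for s
  proof (rule gronwall0[OF _ ec _ C(1) _ s])
    show "t0 \<le> T" using s by simp
    show "0 \<le> e s" for s by (simp add: e_def)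
    fix r assume r: "r \<in> {t0..T}"
    have hu: "((\<lambda>\<tau>. rhs alpha f theta DT tau x \<tau> (u \<tau>)) has_integral (u r - w0)) {t0..r}"
      using u r by (auto simp: solves_on_def)
    have hv: "((\<lambda>\<tau>. rhs alpha f theta DT tau x \<tau> (v \<tau>)) has_integral (v r - w0)) {t0..r}"
      using v r by (auto simp: solves_on_def)
    have hd: "((\<lambda>\<tau>. rhs alpha f theta DT tau x \<tau> (u \<tau>) - rhs alpha f theta DT tau x \<tau> (v \<tau>)) has_integral (u r - v r)) {t0..r}"
      using has_integral_diff[OF hu hv] by simp
    have "e r = norm (integral {t0..r} (\<lambda>\<tau>. rhs alpha f theta DT tau x \<tau> (u \<tau>) - rhs alpha f theta DT tau x \<tau> (v \<tau>)))"
      using hd by (simp add: e_def integral_unique)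
    also have "\<dots> \<le> integral {t0..r} (\<lambda>s. C * e s)"
    proof (rule integral_norm_bound_integral)
      show "(\<lambda>\<tau>. rhs alpha f theta DT tau x \<tau> (u \<tau>) - rhs alpha f theta DT tau x \<tau> (v \<tau>)) integrable_on {t0..r}"
        using hd by blast
      show "(\<lambda>s. C * e s) integrable_on {t0..r}"
        by (intro integrable_continuous_real continuous_intros continuous_on_subset[OF ec]) (use r in auto)
      fix s assume s: "s \<in> {t0..r}"
      then have s': "s \<in> {t0..T}" using r by auto
      have "norm (rhs alpha f theta DT tau x s (u s) - rhs alpha f theta DT tau x s (v s))
          = \<bar>sig DT tau s\<bar> * norm (Fv alpha f theta x (u s) - Fv alpha f theta x (v s))"
        by (simp add: rhs_eq scaleR_diff_right[symmetric])
      also have "\<dots> \<le> 1 * (C * e s)"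
        using sigb[of s] C(2) uR[OF s'] unfolding e_def
        by (intro mult_mono) auto
      finally show "norm (rhs alpha f theta DT tau x s (u s) - rhs alpha f theta DT tau x s (v s)) \<le> C * e s" by simp
    qed
    also have "\<dots> = C * integral {t0..r} e" by simp
    finally show "e r \<le> C * integral {t0..r} e" .
  qed
  then show ?thesis using t by (simp add: e_def)
qed

lemma exists_global:
  "\<exists>w. solves_on (rhs alpha f theta DT tau x) t0 w0 {t0..} w"
proof -
  define W where "W T = (SOME u. solves_on (rhs alpha f theta DT tau x) t0 w0 {t0..T} u)" for T
  have WT: "solves_on (rhs alpha f theta DT tau x) t0 w0 {t0..T} (W T)" if "T \<ge> t0" for T
    unfolding W_def by (rule someI_ex[OF exists_T[OF that]])
  define w where "w t = W t t" for t
  have agree: "w t = W T t" if "t0 \<le> t" "t \<le> T" for t T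
    unfolding w_def
    by (rule uniq[OF WT solves_on_mono[OF WT]]) (use that in auto)
  have "solves_on (rhs alpha f theta DT tau x) t0 w0 {t0..} w"
    unfolding solves_on_def
  proof (intro conjI ballI)
    show "w t0 = w0" using WT[of t0] by (simp add: w_def solves_on_def)
    show "continuous_on {t0..} w"
      unfolding continuous_on_eq_continuous_within
    proof
      fix t assume t: "t \<in> {t0..}"
      have "continuous_on {t0..t+1} (W (t+1))" using WT[of "t+1"] t by (simp add: solves_on_def)
      then have "continuous_on {t0..t+1} w" by (rule continuous_on_eq) (use agree in auto)
      then have c1: "continuous (at t within {t0..t+1}) w"
        using t by (simp add: continuous_on_eq_continuous_within)
      have "at t within {t0..t+1} = at t within {t0..}"
        by (rule at_within_nhd[where S = "{..<t+1}"]) auto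
      then show "continuous (at t within {t0..}) w" using c1 by (simp add: continuous_within)
    qed
    fix t assume t: "t \<in> {t0..}"
    have hI: "((\<lambda>\<tau>. rhs alpha f theta DT tau x \<tau> (W t \<tau>)) has_integral (W t t - w0)) {t0..t}"
      using WT[of t] t by (simp add: solves_on_def)
    have "\<And>\<tau>. \<tau> \<in> {t0..t} \<Longrightarrow> rhs alpha f theta DT tau x \<tau> (W t \<tau>) = rhs alpha f theta DT tau x \<tau> (w \<tau>)"
      using agree t by auto
    from has_integral_eq[OF this hI]
    show "((\<lambda>\<tau>. rhs alpha f theta DT tau x \<tau> (w \<tau>)) has_integral (w t - w0)) {t0..t}"
      by (simp add: w_def)
  qed
  then show ?thesis by blast
qed


lemma Fv_isCont: "isCont (Fv alpha f theta x) z"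
  using Fv_cont[OF fc, of UNIV alpha theta x] by (simp add: continuous_on_eq_continuous_at)

lemma f_isCont: "isCont f z"
  using fc by (simp add: continuous_on_eq_continuous_at)

lemma sol_deriv:
  assumes sol: "solves_on (rhs alpha f theta DT tau x) t0 w0 {t0..} w"
    and t: "t0 < t" "t \<notin> Dset DT tau"
  shows "(w has_vector_derivative sig DT tau t *\<^sub>R Fv alpha f theta x (w t)) (at t)"
proof -
  define b where "b = t + 1"
  define S where "S = Dset DT tau \<inter> {t0..b}"
  have S: "finite S" unfolding S_def by (rule Dfin)
  have wc: "continuous_on {t0..} w" using sol by (simp add: solves_on_def)
  have hI: "((\<lambda>\<tau>. rhs alpha f theta DT tau x \<tau> (w \<tau>)) has_integral (w s - w0)) {t0..s}" if "s \<ge> t0" for s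
    using sol that by (simp add: solves_on_def)
  have ig: "(\<lambda>\<tau>. rhs alpha f theta DT tau x \<tau> (w \<tau>)) integrable_on {t0..b}"
    using hI[of b] t by (auto simp: b_def)
  have weq: "w s = w0 + integral {t0..s} (\<lambda>\<tau>. rhs alpha f theta DT tau x \<tau> (w \<tau>))" if "s \<in> {t0..b} - S" for s
    using hI[of s] that by (simp add: integral_unique)
  have t': "t \<in> {t0..b} - S" using t by (auto simp: b_def S_def)
  have "continuous (at t within {t0..}) w" using wc t by (simp add: continuous_on_eq_continuous_within)
  then have cw: "continuous (at t within {t0..b} - S) w"
    by (rule continuous_within_subset) auto
  have c_sig: "continuous (at t within {t0..b} - S) (sig DT tau)"
    by (rule continuous_at_imp_continuous_at_within[OF sigc[OF t(2)]])
  have c_F: "continuous (at t within {t0..b} - S) (\<lambda>\<tau>. Fv alpha f theta x (w \<tau>))"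
    by (rule continuous_within_compose3[OF Fv_isCont cw])
  have "continuous (at t within {t0..b} - S) (\<lambda>\<tau>. sig DT tau \<tau> *\<^sub>R Fv alpha f theta x (w \<tau>))"
    by (rule continuous_scaleR[OF c_sig c_F])
  then have "continuous (at t within {t0..b} - S) (\<lambda>\<tau>. rhs alpha f theta DT tau x \<tau> (w \<tau>))"
    by (simp add: rhs_eq)
  note d0 = integral_has_vector_derivative_continuous_at[OF ig t' S this]
  have "((\<lambda>u. w0 + integral {t0..u} (\<lambda>\<tau>. rhs alpha f theta DT tau x \<tau> (w \<tau>))) has_vector_derivative
      rhs alpha f theta DT tau x t (w t)) (at t within {t0..b} - S)"
    using has_vector_derivative_add[OF has_vector_derivative_const[of w0] d0] by simp
  then have "(w has_vector_derivative rhs alpha f theta DT tau x t (w t)) (at t within {t0..b} - S)"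
    by (rule has_vector_derivative_transform[OF t', rotated]) (simp add: weq)
  then have der: "(w has_vector_derivative rhs alpha f theta DT tau x t (w t)) (at t within {t0<..<b} - S)"
    by (rule has_vector_derivative_within_subset) auto
  have opn: "open ({t0<..<b} - S)" using S by (intro open_Diff finite_imp_closed) auto
  have mem: "t \<in> {t0<..<b} - S" using t' t by (auto simp: b_def)
  have "(w has_vector_derivative rhs alpha f theta DT tau x t (w t)) (at t)"
    using has_vector_derivative_within_open[THEN iffD1, OF mem opn der] .
  then show ?thesis by (simp add: rhs_eq)
qed

definition qf :: "(real \<Rightarrow> 'a) \<Rightarrow> real \<Rightarrow> real" where
  "qf w t = sig DT tau t * (f (inner (w t) x - theta) * (inner (w t) x)\<^sup>2)"

lemma qf_nonneg: "qf w t \<ge> 0"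
  unfolding qf_def using sigb[of t] fnn by (intro mult_nonneg_nonneg) auto

lemma qf_isCont:
  assumes sol: "solves_on (rhs alpha f theta DT tau x) t0 w0 {t0..} w"
    and t: "t0 < t" "t \<notin> Dset DT tau"
  shows "isCont (qf w) t"
proof -
  have "isCont w t" using sol_deriv[OF sol t] has_vector_derivative_continuous by blast
  then show ?thesis unfolding qf_def
    by (intro continuous_intros sigc[OF t(2)] isCont_o2[OF _ f_isCont])
qed

lemma qf_int:
  assumes sol: "solves_on (rhs alpha f theta DT tau x) t0 w0 {t0..} w"
  shows "qf w integrable_on {t0..b}"
proof -
  have wc: "continuous_on {t0..b} w" using sol by (auto simp: solves_on_def intro: continuous_on_subset)
  have c1: "continuous_on {t0..b} (\<lambda>s. inner (w s) x - theta)" by (intro continuous_intros wc)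
  have c2: "continuous_on {t0..b} (\<lambda>s. f (inner (w s) x - theta))"
    by (rule continuous_on_compose2[OF fc c1]) simp
  have gc: "continuous_on {t0..b} (\<lambda>s. f (inner (w s) x - theta) * (inner (w s) x)\<^sup>2)"
    by (intro continuous_intros c2 wc)
  have "compact ((\<lambda>s. f (inner (w s) x - theta) * (inner (w s) x)\<^sup>2) ` {t0..b})"
    by (intro compact_continuous_image gc) simp
  then have "bounded ((\<lambda>s. f (inner (w s) x - theta) * (inner (w s) x)\<^sup>2) ` {t0..b})"
    by (rule compact_imp_bounded)
  then obtain M where "\<forall>z\<in>(\<lambda>s. f (inner (w s) x - theta) * (inner (w s) x)\<^sup>2) ` {t0..b}. norm z \<le> M"
    unfolding bounded_iff by blast
  then have M: "\<And>s. s \<in> {t0..b} \<Longrightarrow> \<bar>f (inner (w s) x - theta) * (inner (w s) x)\<^sup>2\<bar> \<le> M"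
    by auto
  show ?thesis
  proof (rule pc_integrable[where S = "(Dset DT tau \<inter> {t0..b}) \<union> {t0, b}" and M = M])
    show "finite (Dset DT tau \<inter> {t0..b} \<union> {t0, b})" using Dfin by simp
    fix s assume s: "s \<in> {t0..b} - (Dset DT tau \<inter> {t0..b} \<union> {t0, b})"
    then show "isCont (qf w) s" by (intro qf_isCont[OF sol]) auto
  next
    fix s assume s: "s \<in> {t0..b}"
    have "norm (qf w s) = \<bar>sig DT tau s\<bar> * \<bar>f (inner (w s) x - theta) * (inner (w s) x)\<^sup>2\<bar>"
      by (simp add: qf_def abs_mult)
    also have "\<dots> \<le> 1 * M" using sigb[of s] M[OF s] by (intro mult_mono) auto
    finally show "norm (qf w s) \<le> M" by simp
  qed
qed

lemma Q_deriv:
  assumes sol: "solves_on (rhs alpha f theta DT tau x) t0 w0 {t0..} w"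
    and t: "t \<in> {t0<..<b} - Dset DT tau"
  shows "((\<lambda>s. integral {t0..s} (qf w)) has_real_derivative qf w t) (at t)"
proof -
  define S where "S = (Dset DT tau \<inter> {t0..b}) \<union> {t0, b}"
  have S: "finite S" using Dfin by (simp add: S_def)
  have t': "t \<in> {t0..b} - S" using t by (auto simp: S_def)
  have tt: "t0 < t" "t \<notin> Dset DT tau" using t by auto
  have c: "continuous (at t within {t0..b} - S) (qf w)"
    by (rule continuous_at_imp_continuous_at_within[OF qf_isCont[OF sol tt]])
  have "((\<lambda>s. integral {t0..s} (qf w)) has_vector_derivative qf w t) (at t within {t0..b} - S)"
    by (rule integral_has_vector_derivative_continuous_at[OF qf_int[OF sol] t' S c])
  then have der: "((\<lambda>s. integral {t0..s} (qf w)) has_vector_derivative qf w t) (at t within {t0<..<b} - S)"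
    by (rule has_vector_derivative_within_subset) auto
  have opn: "open ({t0<..<b} - S)" using S by (intro open_Diff finite_imp_closed) auto
  have mem: "t \<in> {t0<..<b} - S" using t' t by (auto simp: S_def)
  have "((\<lambda>s. integral {t0..s} (qf w)) has_vector_derivative qf w t) (at t)"
    using has_vector_derivative_within_open[THEN iffD1, OF mem opn der] .
  then show ?thesis by (simp add: has_real_derivative_iff_has_vector_derivative)
qed

lemma V_ident:
  assumes sol: "solves_on (rhs alpha f theta DT tau x) t0 w0 {t0..} w" and t: "t \<ge> t0"
  shows "inner (w t) (w t) - 1 = exp (- ((2 * alpha) * integral {t0..t} (qf w))) * (inner w0 w0 - 1)"
proof -
  have wc: "continuous_on {t0..t} w" using sol by (auto simp: solves_on_def intro: continuous_on_subset)
  have "(\<lambda>s. inner (w s) (w s) - 1) t = exp (- ((2 * alpha) * integral {t0..t} (qf w))) *\<^sub>R (\<lambda>s. inner (w s) (w s) - 1) t0"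
  proof (rule lin_decay[OF t Dfin[of t0 t], where k = "qf w"])
    show "continuous_on {t0..t} (\<lambda>s. inner (w s) (w s) - 1)" by (intro continuous_intros wc)
    show "continuous_on {t0..t} (\<lambda>s. integral {t0..s} (qf w))"
      by (rule indefinite_integral_continuous_1[OF qf_int[OF sol]])
    show "integral {t0..t0} (qf w) = 0" by simp
    fix s assume s: "s \<in> {t0<..<t} - Dset DT tau \<inter> {t0..t}"
    then have s': "s \<in> {t0<..<t} - Dset DT tau" by auto
    show "((\<lambda>s. integral {t0..s} (qf w)) has_real_derivative qf w s) (at s)"
      by (rule Q_deriv[OF sol s'])
    have d: "(w has_vector_derivative sig DT tau s *\<^sub>R Fv alpha f theta x (w s)) (at s)"
      using sol_deriv[OF sol] s by auto
    have "((\<lambda>s. inner (w s) (w s) - 1) has_real_derivative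
        (inner (w s) (sig DT tau s *\<^sub>R Fv alpha f theta x (w s)) + inner (sig DT tau s *\<^sub>R Fv alpha f theta x (w s)) (w s)) - 0) (at s)"
      by (intro DERIV_diff vd_inner[OF d d] DERIV_const)
    moreover have "(inner (w s) (sig DT tau s *\<^sub>R Fv alpha f theta x (w s)) + inner (sig DT tau s *\<^sub>R Fv alpha f theta x (w s)) (w s)) - 0
        = - ((2 * alpha) * qf w s) * (inner (w s) (w s) - 1)"
      by (simp add: inner_commute[of "Fv alpha f theta x (w s)" "w s"] inner_Fv qf_def algebra_simps)
    ultimately show "((\<lambda>s. inner (w s) (w s) - 1) has_vector_derivative - ((2 * alpha) * qf w s) *\<^sub>R (inner (w s) (w s) - 1)) (at s)"
      by (simp add: has_real_derivative_iff_has_vector_derivative[symmetric])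
  qed
  then show ?thesis using sol by (simp add: solves_on_def)
qed


lemma p_ident:
  assumes sol: "solves_on (rhs alpha f theta DT tau x) t0 w0 {t0..} w" and t: "t \<ge> t0"
    and n: "inner x x \<noteq> 0"
  shows "w t - (inner (w t) x / inner x x) *\<^sub>R x = exp (- (alpha * integral {t0..t} (qf w))) *\<^sub>R (w0 - (inner w0 x / inner x x) *\<^sub>R x)"
proof -
  have wc: "continuous_on {t0..t} w" using sol by (auto simp: solves_on_def intro: continuous_on_subset)
  have "(\<lambda>s. w s - (inner (w s) x / inner x x) *\<^sub>R x) t = exp (- (alpha * integral {t0..t} (qf w))) *\<^sub>R (\<lambda>s. w s - (inner (w s) x / inner x x) *\<^sub>R x) t0"
  proof (rule lin_decay[OF t Dfin[of t0 t], where k = "qf w"])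
    show "continuous_on {t0..t} (\<lambda>s. w s - (inner (w s) x / inner x x) *\<^sub>R x)"
      by (intro continuous_intros wc) (use n in auto)
    show "continuous_on {t0..t} (\<lambda>s. integral {t0..s} (qf w))"
      by (rule indefinite_integral_continuous_1[OF qf_int[OF sol]])
    show "integral {t0..t0} (qf w) = 0" by simp
    fix s assume s: "s \<in> {t0<..<t} - Dset DT tau \<inter> {t0..t}"
    then have s': "s \<in> {t0<..<t} - Dset DT tau" by auto
    show "((\<lambda>s. integral {t0..s} (qf w)) has_real_derivative qf w s) (at s)"
      by (rule Q_deriv[OF sol s'])
    have d: "(w has_vector_derivative sig DT tau s *\<^sub>R Fv alpha f theta x (w s)) (at s)"
      using sol_deriv[OF sol] s by auto
    have dy: "((\<lambda>s. inner (w s) x / inner x x) has_real_derivative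
        (inner (w s) 0 + inner (sig DT tau s *\<^sub>R Fv alpha f theta x (w s)) x) / inner x x) (at s)"
      by (rule DERIV_cdivide[OF vd_inner[OF d has_vector_derivative_const]])
    have "((\<lambda>s. w s - (inner (w s) x / inner x x) *\<^sub>R x) has_vector_derivative
        sig DT tau s *\<^sub>R Fv alpha f theta x (w s) - ((inner (w s) x / inner x x) *\<^sub>R 0 +
          ((inner (w s) 0 + inner (sig DT tau s *\<^sub>R Fv alpha f theta x (w s)) x) / inner x x) *\<^sub>R x)) (at s)"
      by (rule has_vector_derivative_diff[OF d has_vector_derivative_scaleR[OF dy has_vector_derivative_const]])
    then have "((\<lambda>s. w s - (inner (w s) x / inner x x) *\<^sub>R x) has_vector_derivative
        sig DT tau s *\<^sub>R Fv alpha f theta x (w s) - (inner (sig DT tau s *\<^sub>R Fv alpha f theta x (w s)) x / inner x x) *\<^sub>R x) (at s)"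
      by simp
    then show "((\<lambda>s. w s - (inner (w s) x / inner x x) *\<^sub>R x) has_vector_derivative
        - (alpha * qf w s) *\<^sub>R (w s - (inner (w s) x / inner x x) *\<^sub>R x)) (at s)"
      unfolding p_alg[OF n] qf_def by (simp only: mult.assoc)
  qed
  then show ?thesis using sol by (simp add: solves_on_def)
qed

lemma Q_nonneg:
  assumes sol: "solves_on (rhs alpha f theta DT tau x) t0 w0 {t0..} w"
  shows "integral {t0..t} (qf w) \<ge> 0"
  using qf_int[OF sol] qf_nonneg by (intro integral_nonneg) auto

lemma sol_bounded:
  assumes sol: "solves_on (rhs alpha f theta DT tau x) t0 w0 {t0..} w"
  shows "bounded (w ` {t0..})"
proof -
  define B where "B = 1 + \<bar>inner w0 w0 - 1\<bar>"
  have "norm (w t) \<le> B" if t: "t \<ge> t0" for t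
  proof -
    define E where "E = exp (- ((2 * alpha) * integral {t0..t} (qf w)))"
    have E: "E \<le> 1" "0 \<le> E"
      using Q_nonneg[OF sol, of t] ap by (simp_all add: E_def)
    have "inner (w t) (w t) - 1 = E * (inner w0 w0 - 1)"
      unfolding E_def by (rule V_ident[OF sol t])
    then have "\<bar>inner (w t) (w t) - 1\<bar> = E * \<bar>inner w0 w0 - 1\<bar>" using E by (simp add: abs_mult)
    also have "\<dots> \<le> 1 * \<bar>inner w0 w0 - 1\<bar>" by (rule mult_right_mono[OF E(1)]) simp
    finally have "\<bar>inner (w t) (w t) - 1\<bar> \<le> 1 * \<bar>inner w0 w0 - 1\<bar>" .
    then have "(norm (w t))\<^sup>2 \<le> B" by (simp add: B_def power2_norm_eq_inner abs_le_iff)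
    also have "B \<le> B\<^sup>2"
    proof -
      have B1: "1 \<le> B" by (simp add: B_def)
      have "1 * B \<le> B * B" by (rule mult_right_mono[OF B1]) (use B1 in simp)
      then show ?thesis by (simp add: power2_eq_square)
    qed
    finally show ?thesis using abs_le_square_iff[of "norm (w t)" B] by (simp add: B_def)
  qed
  then show ?thesis unfolding bounded_iff by auto
qed


lemma exp_decay_lim:
  fixes Q :: "real \<Rightarrow> real" and c :: real
  assumes Qtop: "filterlim Q at_top at_top" and c: "c > 0"
  shows "((\<lambda>t. exp (- (c * Q t))) \<longlongrightarrow> 0) at_top"
proof -
  have "filterlim (\<lambda>t. c * Q t) at_top at_top"
    by (rule filterlim_tendsto_pos_mult_at_top[OF tendsto_const c Qtop])
  then have "filterlim (\<lambda>t. - (c * Q t)) at_bot at_top"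
    by (simp add: filterlim_uminus_at_bot)
  from filterlim_compose[OF exp_at_bot this] show ?thesis .
qed

lemma sol_conv:
  assumes sol: "solves_on (rhs alpha f theta DT tau x) t0 w0 {t0..} w"
    and th: "theta \<ge> 0" and L: "L > 0" and dl: "\<delta> > 0"
    and exc0: "\<forall>t\<ge>t0. integral {t..t+L} (\<lambda>\<tau>. vout f (stim DT tau x \<tau>) (w \<tau>) theta
                          * (inner (stim DT tau x \<tau>) (w \<tau>))\<^sup>2) > \<delta>"
  shows "(w \<longlongrightarrow> x /\<^sub>R norm x) at_top"
proof -
  have qeq: "(\<lambda>\<tau>. vout f (stim DT tau x \<tau>) (w \<tau>) theta * (inner (stim DT tau x \<tau>) (w \<tau>))\<^sup>2) = qf w"
    by (rule ext) (simp add: qint_sig[OF sig01] qf_def)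
  have exc: "integral {t..t+L} (qf w) > \<delta>" if "t \<ge> t0" for t
    using exc0 that unfolding qeq by blast
  have xnz: "x \<noteq> 0"
  proof
    assume "x = 0"
    then have "qf w = (\<lambda>_. 0)" unfolding qf_def fun_eq_iff by simp
    then show False using exc[of t0] dl by simp
  qed
  define n2 where "n2 = inner x x"
  have n2: "n2 > 0" using xnz by (simp add: n2_def)
  have n: "inner x x \<noteq> 0" using n2 by (simp add: n2_def)
  define Q where "Q t = integral {t0..t} (qf w)" for t
  have Qcomb: "Q b = Q a + integral {a..b} (qf w)" if "t0 \<le> a" "a \<le> b" for a b
    unfolding Q_def using Henstock_Kurzweil_Integration.integral_combine[OF that qf_int[OF sol]] by simp
  have qint_sub: "qf w integrable_on {a..b}" if "t0 \<le> a" for a b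
  proof (cases "a \<le> b")
    case True
    show ?thesis by (rule integrable_on_subinterval[OF qf_int[OF sol, of b]]) (use that True in auto)
  next
    case False then show ?thesis by (simp add: integrable_on_empty)
  qed
  have Qmono: "Q a \<le> Q b" if "t0 \<le> a" "a \<le> b" for a b
    using Qcomb[OF that] qint_sub[OF that(1), of b] qf_nonneg
    by (simp add: integral_nonneg)
  have Qn: "Q (t0 + real n * L) \<ge> real n * \<delta>" for n
  proof (induction n)
    case 0 then show ?case by (simp add: Q_def)
  next
    case (Suc n)
    have a: "t0 \<le> t0 + real n * L" using L by simp
    have "Q (t0 + real (Suc n) * L) = Q (t0 + real n * L) + integral {t0 + real n * L..t0 + real n * L + L} (qf w)"
      using Qcomb[OF a, of "t0 + real n * L + L"] L by (simp add: algebra_simps)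
    moreover have "integral {t0 + real n * L..t0 + real n * L + L} (qf w) > \<delta>" using exc[OF a] .
    ultimately show ?case using Suc.IH by (simp add: algebra_simps)
  qed
  have Qtop: "filterlim Q at_top at_top"
    unfolding filterlim_at_top
  proof
    fix Z :: real
    obtain n :: nat where n: "Z / \<delta> < real n" using reals_Archimedean2 by blast
    then have Zn: "Z \<le> real n * \<delta>" using dl by (simp add: field_simps)
    have "\<forall>\<^sub>F t in at_top. t0 + real n * L \<le> t" by (rule eventually_ge_at_top)
    then show "\<forall>\<^sub>F t in at_top. Z \<le> Q t"
    proof (rule eventually_mono)
      fix t assume t: "t0 + real n * L \<le> t"
      have "Z \<le> Q (t0 + real n * L)" using Zn Qn[of n] by linarith
      also have "\<dots> \<le> Q t" by (rule Qmono) (use t L in auto)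
      finally show "Z \<le> Q t" .
    qed
  qed
  have ev0: "\<forall>\<^sub>F t in at_top. t \<ge> t0" by (rule eventually_ge_at_top)
  define P where "P t = w t - (inner (w t) x / n2) *\<^sub>R x" for t
  define y where "y t = inner (w t) x" for t
  have Vlim: "((\<lambda>t. inner (w t) (w t)) \<longlongrightarrow> 1) at_top"
  proof -
    have "((\<lambda>t. 1 + exp (- ((2 * alpha) * Q t)) * (inner w0 w0 - 1)) \<longlongrightarrow> 1 + 0 * (inner w0 w0 - 1)) at_top"
      by (intro tendsto_intros exp_decay_lim[OF Qtop]) (use ap in simp)
    moreover have "\<forall>\<^sub>F t in at_top. 1 + exp (- ((2 * alpha) * Q t)) * (inner w0 w0 - 1) = inner (w t) (w t)"
      using ev0
    proof (rule eventually_mono)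
      fix t assume "t0 \<le> t"
      from V_ident[OF sol this]
      show "1 + exp (- ((2 * alpha) * Q t)) * (inner w0 w0 - 1) = inner (w t) (w t)"
        unfolding Q_def by linarith
    qed
    ultimately show ?thesis by (simp add: tendsto_cong)
  qed
  have Plim: "(P \<longlongrightarrow> 0) at_top"
  proof -
    have "((\<lambda>t. exp (- (alpha * Q t)) *\<^sub>R P t0) \<longlongrightarrow> 0 *\<^sub>R P t0) at_top"
      by (intro tendsto_intros exp_decay_lim[OF Qtop ap])
    moreover have "\<forall>\<^sub>F t in at_top. exp (- (alpha * Q t)) *\<^sub>R P t0 = P t"
      using ev0 by (rule eventually_mono) (use p_ident[OF sol _ n] sol in \<open>simp add: Q_def P_def n2_def solves_on_def\<close>)
    ultimately show ?thesis by (simp add: tendsto_cong)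
  qed
  have y2lim: "((\<lambda>t. (y t)\<^sup>2) \<longlongrightarrow> n2) at_top"
  proof -
    have "((\<lambda>t. n2 * (inner (w t) (w t) - inner (P t) (P t))) \<longlongrightarrow> n2 * (1 - inner (0::'a) 0)) at_top"
      by (intro tendsto_intros Vlim tendsto_inner[OF Plim Plim])
    moreover have "(\<lambda>t. n2 * (inner (w t) (w t) - inner (P t) (P t))) = (\<lambda>t. (y t)\<^sup>2)"
      by (rule ext) (simp add: y2_alg[OF n] y_def P_def n2_def)
    ultimately show ?thesis by simp
  qed
  have "\<forall>\<^sub>F t in at_top. (y t)\<^sup>2 > n2 / 4"
    by (rule order_tendstoD(1)[OF y2lim]) (use n2 in simp)
  then obtain N where N: "\<And>t. t \<ge> N \<Longrightarrow> (y t)\<^sup>2 > n2 / 4"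
    unfolding eventually_at_top_linorder by blast
  define T1 where "T1 = max N t0"
  have T1: "T1 \<ge> t0" "T1 \<ge> N" by (auto simp: T1_def)
  have ynz: "y t \<noteq> 0" if "t \<ge> T1" for t using N[of t] that T1 n2 by auto
  have yc: "continuous_on {a..b} y" if "t0 \<le> a" for a b
  proof -
    have "continuous_on {a..b} w" using sol that by (auto simp: solves_on_def intro: continuous_on_subset)
    then show ?thesis unfolding y_def by (intro continuous_intros)
  qed
  obtain s where s: "s \<in> {T1..T1+L}" "qf w s > 0"
  proof (rule ccontr)
    assume "\<not> thesis"
    then have le: "\<And>s. s \<in> {T1..T1+L} \<Longrightarrow> qf w s \<le> 0" using that by force
    have "integral {T1..T1+L} (qf w) \<le> integral {T1..T1+L} (\<lambda>_. 0::real)"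
      by (rule integral_le[OF qint_sub[OF T1(1)]]) (auto simp: le)
    then show False using exc[OF T1(1)] dl by simp
  qed
  have ys: "y s > 0"
  proof -
    have "f (y s - theta) \<noteq> 0" using s(2) by (auto simp: qf_def y_def)
    then have "\<not> y s - theta \<le> 0" using fnp[of "y s - theta"] by blast
    then have "y s - theta > 0" by simp
    then show ?thesis using th by simp
  qed
  have ypos: "y t > 0" if t: "t \<ge> T1" for t
  proof (rule ccontr)
    assume "\<not> y t > 0"
    then have yt: "y t < 0" using ynz[OF t] by simp
    have sT: "s \<ge> T1" using s(1) by simp
    show False
    proof (cases "t \<le> s")
      case True
      obtain r where r: "t \<le> r" "r \<le> s" "y r = 0"
        using IVT'[of y t 0 s, OF _ _ True yc] yt ys T1 t by auto
      then show False using ynz[of r] t by simp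
    next
      case False
      obtain r where r: "s \<le> r" "r \<le> t" "y r = 0"
        using IVT2'[of y t 0 s, OF _ _ _ yc] yt ys T1 sT False by auto
      then show False using ynz[of r] sT by simp
    qed
  qed
  have ylim: "(y \<longlongrightarrow> norm x) at_top"
  proof -
    have "((\<lambda>t. sqrt ((y t)\<^sup>2)) \<longlongrightarrow> sqrt n2) at_top" by (intro tendsto_intros y2lim)
    moreover have "\<forall>\<^sub>F t in at_top. sqrt ((y t)\<^sup>2) = y t"
      using eventually_ge_at_top[of T1] by (rule eventually_mono) (use ypos in \<open>force\<close>)
    moreover have "sqrt n2 = norm x" by (simp add: n2_def norm_eq_sqrt_inner)
    ultimately show ?thesis by (simp add: tendsto_cong)
  qed
  have "((\<lambda>t. P t + (y t / n2) *\<^sub>R x) \<longlongrightarrow> 0 + (norm x / n2) *\<^sub>R x) at_top"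
    by (intro tendsto_intros Plim ylim) (use n2 in simp)
  moreover have "(\<lambda>t. P t + (y t / n2) *\<^sub>R x) = w" by (simp add: P_def y_def fun_eq_iff)
  moreover have "norm x / n2 = inverse (norm x)"
    using xnz by (simp add: n2_def power2_norm_eq_inner[symmetric] power2_eq_square field_simps)
  ultimately show ?thesis by simp
qed

end

theorem lemma1:
  fixes x w0 :: "real ^ 'n"
    and f :: "real \<Rightarrow> real"
    and tau :: "nat \<Rightarrow> real"
    and DT theta alpha t0 :: real
  assumes DT_pos: "DT > 0"
    and tau_sep: "\<And>j. tau (Suc j) > tau j + DT"
    and f_cont: "continuous_on UNIV f"
    and f_loclip: "\<And>u. \<exists>e>0. \<exists>K. K-lipschitz_on (cball u e) f"
    and f_nonpos: "\<And>u. u \<le> 0 \<Longrightarrow> f u = 0"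
    and f_pos: "\<And>u. u > 0 \<Longrightarrow> f u > 0"
    and alpha_pos: "alpha > 0"
    and w0_nz: "w0 \<noteq> 0"
  shows
    "(\<exists>w. solves_on (rhs alpha f theta DT tau x) t0 w0 {t0..} w)
     \<and> (\<forall>w u T. solves_on (rhs alpha f theta DT tau x) t0 w0 {t0..} w
           \<longrightarrow> solves_on (rhs alpha f theta DT tau x) t0 w0 {t0..T} u
           \<longrightarrow> (\<forall>t\<in>{t0..T}. u t = w t))
     \<and> (\<forall>w. solves_on (rhs alpha f theta DT tau x) t0 w0 {t0..} w \<longrightarrow>
           bounded (w ` {t0..})
           \<and> ((theta \<ge> 0 \<and>
               (\<exists>L>0. \<exists>\<delta>>0. \<forall>t\<ge>t0.
                  integral {t..t+L}
                    (\<lambda>\<tau>. vout f (stim DT tau x \<tau>) (w \<tau>) theta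
                          * (inner (stim DT tau x \<tau>) (w \<tau>))\<^sup>2) > \<delta>))
              \<longrightarrow> (w \<longlongrightarrow> x /\<^sub>R norm x) at_top))"
proof (intro conjI allI impI ballI)
  note ctx = DT_pos tau_sep f_cont f_loclip f_nonpos f_pos alpha_pos
  show "\<exists>w. solves_on (rhs alpha f theta DT tau x) t0 w0 {t0..} w"
    by (rule exists_global[where DT=DT and tau=tau and f=f and alpha=alpha and theta=theta and x=x, OF ctx])
next
  fix w u T t
  assume w: "solves_on (rhs alpha f theta DT tau x) t0 w0 {t0..} w"
    and u: "solves_on (rhs alpha f theta DT tau x) t0 w0 {t0..T} u"
    and t: "t \<in> {t0..T}"
  have w': "solves_on (rhs alpha f theta DT tau x) t0 w0 {t0..T} w"
    by (rule solves_on_mono[OF w]) auto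
  show "u t = w t"
    by (rule uniq[where DT=DT and tau=tau and f=f and alpha=alpha and theta=theta and x=x,
          OF DT_pos tau_sep f_cont f_loclip f_nonpos f_pos alpha_pos u w' t])
next
  fix w
  assume w: "solves_on (rhs alpha f theta DT tau x) t0 w0 {t0..} w"
  show "bounded (w ` {t0..})"
    by (rule sol_bounded[where DT=DT and tau=tau and f=f and alpha=alpha and theta=theta and x=x,
          OF DT_pos tau_sep f_cont f_loclip f_nonpos f_pos alpha_pos w])
next
  fix w
  assume w: "solves_on (rhs alpha f theta DT tau x) t0 w0 {t0..} w"
    and h: "theta \<ge> 0 \<and> (\<exists>L>0. \<exists>\<delta>>0. \<forall>t\<ge>t0.
                  integral {t..t+L}
                    (\<lambda>\<tau>. vout f (stim DT tau x \<tau>) (w \<tau>) theta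
                          * (inner (stim DT tau x \<tau>) (w \<tau>))\<^sup>2) > \<delta>)"
  then obtain L \<delta> where L: "L > 0" "\<delta> > 0" and ex: "\<forall>t\<ge>t0.
                  integral {t..t+L}
                    (\<lambda>\<tau>. vout f (stim DT tau x \<tau>) (w \<tau>) theta
                          * (inner (stim DT tau x \<tau>) (w \<tau>))\<^sup>2) > \<delta>"
    by blast
  have th: "theta \<ge> 0" using h by (rule conjunct1)
  show "(w \<longlongrightarrow> x /\<^sub>R norm x) at_top"
    by (rule sol_conv[where DT=DT and tau=tau and f=f and alpha=alpha and theta=theta and x=x,
          OF DT_pos tau_sep f_cont f_loclip f_nonpos f_pos alpha_pos w th L ex])
qed

end
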